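(* In every approval-based SCV instance, every committee maximizing the SW-PAV score among all committees satisfies weak-SW-JR.
   Context: An approval-based sub-committee voting (SCV) instance consists of a set of voters $N=\{1,\ldots,n\}$, a finite set of candidates $C$ partitioned into candidate subsets $C_1,\ldots,C_\ell$, positive integer quotas $k_j\le |C_j|$ with $k=\sum_{j=1}^\ell k_j$, and approval ballots $A_i\subseteq C$ for $i\in N$. A committee is a set $W\subseteq C$ with $|W\cap C_j|=k_j$ for every $j$. Let $r(0)=0$ and $r(t)=\sum_{p=1}^t 1/p$ for $t\ge1$. The SW-PAV score of $W$ is $\sum_{i\in N} r(|W\cap A_i|)$. $W$ satisfies weak-SW-JR if for every $X\subseteq N$ with $|X|\ge n/k$ and $|(\bigcap_{i\in X}A_i)\cap C_j|\ge 1$ for all $j=1,\ldots,\ell$ we have $|W\cap \bigcup_{i\in X}A_i|\ge 1$. *)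

theory Defs
  imports Complex_Main
begin

definition r :: "nat \<Rightarrow> real" where
  "r t = (\<Sum>p=1..t. 1 / real p)"

definition scv_instance ::
  "nat \<Rightarrow> 'c set \<Rightarrow> nat \<Rightarrow> (nat \<Rightarrow> 'c set) \<Rightarrow> (nat \<Rightarrow> nat) \<Rightarrow> (nat \<Rightarrow> 'c set) \<Rightarrow> bool" where
  "scv_instance n C l Cs kq A \<longleftrightarrow>
     n \<ge> 1 \<and> l \<ge> 1 \<and> finite C \<and>
     (\<forall>j\<in>{1..l}. Cs j \<noteq> {}) \<and>
     (\<forall>j\<in>{1..l}. \<forall>j'\<in>{1..l}. j \<noteq> j' \<longrightarrow> Cs j \<inter> Cs j' = {}) \<and>
     (\<Union>j\<in>{1..l}. Cs j) = C \<and>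
     (\<forall>j\<in>{1..l}. 0 < kq j \<and> kq j \<le> card (Cs j)) \<and>
     (\<forall>i\<in>{1..n}. A i \<subseteq> C)"

definition total_k :: "nat \<Rightarrow> (nat \<Rightarrow> nat) \<Rightarrow> nat" where
  "total_k l kq = (\<Sum>j=1..l. kq j)"

definition committee :: "'c set \<Rightarrow> nat \<Rightarrow> (nat \<Rightarrow> 'c set) \<Rightarrow> (nat \<Rightarrow> nat) \<Rightarrow> 'c set \<Rightarrow> bool" where
  "committee C l Cs kq W \<longleftrightarrow> W \<subseteq> C \<and> (\<forall>j\<in>{1..l}. card (W \<inter> Cs j) = kq j)"

definition sw_pav_score :: "nat \<Rightarrow> (nat \<Rightarrow> 'c set) \<Rightarrow> 'c set \<Rightarrow> real" where
  "sw_pav_score n A W = (\<Sum>i=1..n. r (card (W \<inter> A i)))"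

definition weak_sw_jr ::
  "nat \<Rightarrow> nat \<Rightarrow> (nat \<Rightarrow> 'c set) \<Rightarrow> (nat \<Rightarrow> nat) \<Rightarrow> (nat \<Rightarrow> 'c set) \<Rightarrow> 'c set \<Rightarrow> bool" where
  "weak_sw_jr n l Cs kq A W \<longleftrightarrow>
     (\<forall>X. X \<subseteq> {1..n} \<longrightarrow> real (card X) \<ge> real n / real (total_k l kq) \<longrightarrow>
        (\<forall>j\<in>{1..l}. card ((\<Inter>i\<in>X. A i) \<inter> Cs j) \<ge> 1) \<longrightarrow>
        card (W \<inter> (\<Union>i\<in>X. A i)) \<ge> 1)"

end

theory Submission
  imports Defs
begin

lemma r_Suc: "r (Suc t) = r t + 1 / real (Suc t)"
  unfolding r_def by simp

lemma r_0: "r 0 = 0" unfolding r_def by simp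
lemma r_1: "r (Suc 0) = 1" unfolding r_def by simp

lemma r_mono: "a \<le> b \<Longrightarrow> r a \<le> r b"
  unfolding r_def by (rule sum_mono2) auto

lemma voter:
  assumes fW: "finite W" and fA: "finite Ai" and c: "c \<in> W" and d: "d \<notin> W"
    and W': "W' = insert d (W - {c})"
  shows "r (card (W' \<inter> Ai)) \<ge> r (card (W \<inter> Ai)) + (if W \<inter> Ai = {} \<and> d \<in> Ai then 1 else 0)
           - (if c \<in> Ai then 1 / real (card (W \<inter> Ai)) else 0)"
proof (cases "W \<inter> Ai = {} \<and> d \<in> Ai")
  case True
  then have "W' \<inter> Ai = {d}" "c \<notin> Ai" using W' c by auto
  then show ?thesis using True by (simp add: r_0 r_1)
next
  case False
  have fin: "finite (W' \<inter> Ai)" using fA by simp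
  have sub: "(W \<inter> Ai) - {c} \<subseteq> W' \<inter> Ai" using W' by auto
  have le: "card ((W \<inter> Ai) - {c}) \<le> card (W' \<inter> Ai)" using card_mono[OF fin sub] .
  show ?thesis
  proof (cases "c \<in> Ai")
    case True
    then have cin: "c \<in> W \<inter> Ai" using c by auto
    then have t: "card (W \<inter> Ai) = Suc (card ((W \<inter> Ai) - {c}))"
      using fW by (metis card_Suc_Diff1 finite_Int)
    have "r (card (W \<inter> Ai)) - 1 / real (card (W \<inter> Ai)) = r (card ((W \<inter> Ai) - {c}))"
      by (simp only: t r_Suc)
    also have "\<dots> \<le> r (card (W' \<inter> Ai))" using r_mono[OF le] .
    finally have "r (card (W \<inter> Ai)) - 1 / real (card (W \<inter> Ai)) \<le> r (card (W' \<inter> Ai))" .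
    moreover have "W \<inter> Ai \<noteq> {}" using cin by auto
    ultimately show ?thesis using True by (simp del: r_def)
  next
    case cn: False
    then have "W \<inter> Ai - {c} = W \<inter> Ai" by auto
    moreover have "(if W \<inter> Ai = {} \<and> d \<in> Ai then 1 else 0) = (0::real)" using False by simp
    ultimately show ?thesis using r_mono[OF le] cn by (simp del: r_def)
  qed
qed

lemma avg:
  fixes f :: "'a \<Rightarrow> real"
  assumes "finite S" "S \<noteq> {}"
  shows "\<exists>c\<in>S. real (card S) * f c \<le> sum f S"
proof (rule ccontr)
  assume "\<not> ?thesis"
  then have h: "\<forall>c\<in>S. sum f S / real (card S) < f c"
    using assms by (auto simp: field_simps card_gt_0_iff)
  have "(\<Sum>c\<in>S. sum f S / real (card S)) < sum f S"
    using sum_strict_mono[of S "\<lambda>_. sum f S / real (card S)" f] h assms by auto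
  then show False using assms by simp
qed

theorem mainTheorem10:
  fixes n l :: nat and C :: "'c set" and Cs :: "nat \<Rightarrow> 'c set"
    and kq :: "nat \<Rightarrow> nat" and A :: "nat \<Rightarrow> 'c set" and W :: "'c set"
  assumes "scv_instance n C l Cs kq A"
    and "committee C l Cs kq W"
    and "\<forall>W'. committee C l Cs kq W' \<longrightarrow> sw_pav_score n A W' \<le> sw_pav_score n A W"
  shows "weak_sw_jr n l Cs kq A W"
proof -
  from assms(1) have n1: "n \<ge> 1" and l1: "l \<ge> 1" and finC: "finite C"
    and disj: "\<forall>j\<in>{1..l}. \<forall>j'\<in>{1..l}. j \<noteq> j' \<longrightarrow> Cs j \<inter> Cs j' = {}"
    and UC: "(\<Union>j\<in>{1..l}. Cs j) = C"
    and kqp: "\<forall>j\<in>{1..l}. 0 < kq j \<and> kq j \<le> card (Cs j)"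
    and AC: "\<forall>i\<in>{1..n}. A i \<subseteq> C"
    unfolding scv_instance_def by auto
  from assms(2) have WC: "W \<subseteq> C" and Wk: "\<forall>j\<in>{1..l}. card (W \<inter> Cs j) = kq j"
    unfolding committee_def by auto
  have finW: "finite W" using WC finC finite_subset by auto
  have finA: "\<And>i. i \<in> {1..n} \<Longrightarrow> finite (A i)" using AC finC by (meson atLeastAtMost_iff finite_subset)
  have "W = (\<Union>j\<in>{1..l}. W \<inter> Cs j)" using WC UC by auto
  then have "card W = (\<Sum>j\<in>{1..l}. card (W \<inter> Cs j))"
    using card_UN_disjoint[of "{1..l}" "\<lambda>j. W \<inter> Cs j"] finW disj by auto
  also have "\<dots> = total_k l kq" unfolding total_k_def using Wk by simp
  finally have cardW: "card W = total_k l kq" .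
  have kpos: "total_k l kq \<ge> 1"
  proof -
    have "kq 1 \<le> total_k l kq" unfolding total_k_def
      using l1 by (intro member_le_sum) auto
    moreover have "kq 1 > 0" using kqp l1 by auto
    ultimately show ?thesis by simp
  qed
  show ?thesis
    unfolding weak_sw_jr_def
  proof (intro allI impI, rule ccontr)
    fix X assume X: "X \<subseteq> {1..n}"
      and Xc: "real n / real (total_k l kq) \<le> real (card X)"
      and Xj: "\<forall>j\<in>{1..l}. 1 \<le> card ((\<Inter>i\<in>X. A i) \<inter> Cs j)"
      and nW: "\<not> 1 \<le> card (W \<inter> (\<Union>i\<in>X. A i))"
    have finX: "finite X" using X finite_subset by auto
    have WX: "\<forall>i\<in>X. W \<inter> A i = {}"
    proof (intro ballI)
      fix i assume "i \<in> X"
      have "W \<inter> (\<Union>i\<in>X. A i) = {}" using nW finW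
        by (metis One_nat_def Suc_leI card_gt_0_iff finite_Int)
      then show "W \<inter> A i = {}" using \<open>i \<in> X\<close> by blast
    qed
    have kX: "real n \<le> real (total_k l kq) * real (card X)"
      using Xc kpos by (simp add: field_simps)
    have X1: "card X \<ge> 1"
    proof (rule ccontr)
      assume "\<not> card X \<ge> 1"
      then have "card X = 0" by simp
      then show False using kX n1 by simp
    qed
    then obtain x0 where x0: "x0 \<in> X" by (metis card.empty not_one_le_zero ex_in_conv)
    define D where "D c = (\<Sum>i\<in>{1..n}. if c \<in> A i then 1 / real (card (W \<inter> A i)) else 0)" for c
    have "(\<Sum>c\<in>W. D c) = (\<Sum>i\<in>{1..n}. \<Sum>c\<in>W. if c \<in> A i then 1 / real (card (W \<inter> A i)) else 0)"
      unfolding D_def by (rule sum.swap)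
    also have "\<dots> = (\<Sum>i\<in>{1..n}. if W \<inter> A i = {} then 0 else 1)"
    proof (rule sum.cong[OF refl])
      fix i assume "i \<in> {1..n}"
      have "(\<Sum>c\<in>W. if c \<in> A i then 1 / real (card (W \<inter> A i)) else 0)
          = (\<Sum>c\<in>W \<inter> A i. 1 / real (card (W \<inter> A i)))"
        using sum.inter_restrict[OF finW, of "\<lambda>c. 1 / real (card (W \<inter> A i))" "A i"] by simp
      also have "\<dots> = (if W \<inter> A i = {} then 0 else 1)" using finW by simp
      finally show "(\<Sum>c\<in>W. if c \<in> A i then 1 / real (card (W \<inter> A i)) else 0) = (if W \<inter> A i = {} then 0 else 1)" .
    qed
    also have "\<dots> \<le> (\<Sum>i\<in>{1..n}. if i \<in> X then 0 else 1)"
      by (rule sum_mono) (use WX in auto)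
    also have "\<dots> = real (card ({1..n} - X))"
      by (simp add: sum.If_cases Diff_eq)
    also have "\<dots> = real n - real (card X)"
    proof -
      have "card X \<le> n" using card_mono[OF _ X] by simp
      then show ?thesis using X finX by (simp add: card_Diff_subset of_nat_diff)
    qed
    finally have sumD: "(\<Sum>c\<in>W. D c) \<le> real n - real (card X)" .
    have Wne: "W \<noteq> {}" using cardW kpos by auto
    obtain c where cW: "c \<in> W" and cD: "real (card W) * D c \<le> (\<Sum>c\<in>W. D c)"
      using avg[OF finW Wne] by blast
    have "real (total_k l kq) * D c < real (total_k l kq) * real (card X)"
      using cD sumD kX cardW X1 by simp
    then have DcX: "D c < real (card X)" using kpos by simp
    obtain j where j: "j \<in> {1..l}" "c \<in> Cs j" using cW WC UC by auto
    have "card ((\<Inter>i\<in>X. A i) \<inter> Cs j) \<ge> 1" using Xj j by auto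
    then obtain d where d: "d \<in> (\<Inter>i\<in>X. A i)" "d \<in> Cs j"
      by (metis card.empty not_one_le_zero IntE ex_in_conv)
    have dW: "d \<notin> W" using d x0 WX by auto
    define W' where "W' = insert d (W - {c})"
    have "committee C l Cs kq W'"
      unfolding committee_def
    proof
      show "W' \<subseteq> C" using WC d j UC unfolding W'_def by auto
      show "\<forall>j'\<in>{1..l}. card (W' \<inter> Cs j') = kq j'"
      proof
        fix j' assume j': "j' \<in> {1..l}"
        show "card (W' \<inter> Cs j') = kq j'"
        proof (cases "j' = j")
          case True
          have "W' \<inter> Cs j = insert d ((W \<inter> Cs j) - {c})" unfolding W'_def using d by auto
          moreover have "card (insert d ((W \<inter> Cs j) - {c})) = card (W \<inter> Cs j)"
          proof -
            have "c \<in> W \<inter> Cs j" using cW j by auto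
            then have "Suc (card (W \<inter> Cs j - {c})) = card (W \<inter> Cs j)"
              using finW by (metis card_Suc_Diff1 finite_Int)
            then show ?thesis using finW dW by simp
          qed
          ultimately show ?thesis using True Wk j by simp
        next
          case False
          have "d \<notin> Cs j'" "c \<notin> Cs j'" using disj j j' d False by blast+
          then have "W' \<inter> Cs j' = W \<inter> Cs j'" unfolding W'_def by auto
          then show ?thesis using Wk j' by simp
        qed
      qed
    qed
    then have le: "sw_pav_score n A W' \<le> sw_pav_score n A W" using assms(3) by blast
    have "sw_pav_score n A W + real (card X) - D c
        = (\<Sum>i\<in>{1..n}. r (card (W \<inter> A i)) + (if i \<in> X then 1 else 0)
             - (if c \<in> A i then 1 / real (card (W \<inter> A i)) else 0))"
      unfolding sw_pav_score_def D_def using X finX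
      by (simp add: sum.distrib sum_subtractf sum.If_cases Int_absorb1)
    also have "\<dots> \<le> (\<Sum>i\<in>{1..n}. r (card (W' \<inter> A i)))"
    proof (rule sum_mono)
      fix i assume i: "i \<in> {1..n}"
      have "(if i \<in> X then 1 else 0) \<le> (if W \<inter> A i = {} \<and> d \<in> A i then 1 else (0::real))"
        using WX d by auto
      then show "r (card (W \<inter> A i)) + (if i \<in> X then 1 else 0)
             - (if c \<in> A i then 1 / real (card (W \<inter> A i)) else 0) \<le> r (card (W' \<inter> A i))"
        using voter[OF finW finA[OF i] cW dW W'_def] by linarith
    qed
    finally have "sw_pav_score n A W + real (card X) - D c \<le> sw_pav_score n A W'"
      unfolding sw_pav_score_def .
    then show False using le DcX by linarith
  qed
qed

end
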